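(* Let $(X,d_X)$ and $(\Lambda,d_\Lambda)$ be complete metric spaces and, for each $\lambda\in\Lambda$, let $S_\lambda(\cdot,\cdot)$ be a process on $X$. Suppose there exists a compact set $K\subseteq X$ such that (a) for every bounded $B\subseteq X$ and each $\lambda\in\Lambda$ there exists $t_{B,\lambda}$ such that $S_\lambda(t+s,s)B\subseteq K$ for all $t\ge t_{B,\lambda}$ and all $s\in\mathbb R$; and (b) for any $t>0$, the map $\lambda\mapsto S_\lambda(t+s,s)x$ is continuous on $\Lambda$, uniformly for $s\in\mathbb R$ and $x\in K$ (i.e. for each $\lambda_0\in\Lambda$, $t>0$, $\epsilon>0$ there is $\delta>0$ such that $d_\Lambda(\lambda,\lambda_0)<\delta$ implies $d_X(S_\lambda(t+s,s)x,S_{\lambda_0}(t+s,s)x)<\epsilon$ for all $s\in\mathbb R$, $x\in K$). Then the map $\lambda\mapsto\mathbb A_\lambda$, where $\mathbb A_\lambda$ is the uniform attractor of $S_\lambda$, is continuous with respect to the Hausdorff distance at every point of a residual subset of $\Lambda$.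
   Context: A process on a complete metric space $(X,d_X)$ is a two-parameter family of maps $S(t,s):X\to X$, $s\in\mathbb R$, $t\ge s$, with $S(t,t)=\mathrm{id}$, $S(t,\tau)S(\tau,s)=S(t,s)$ for $t\ge\tau\ge s$, and $S(t,s)x$ continuous in $(x,t,s)$. The Hausdorff semi-distance is $\rho_X(A,C)=\sup_{a\in A}\inf_{c\in C}d_X(a,c)$ and the Hausdorff distance is $\Delta_X(A,C)=\max(\rho_X(A,C),\rho_X(C,A))$. The uniform attractor of a process $S$ is the minimal compact set $\mathbb A\subseteq X$ such that $\lim_{t\to\infty}\sup_{s\in\mathbb R}\rho_X(S(t+s,s)B,\mathbb A)=0$ for every bounded $B\subseteq X$; under assumption (a) the uniform attractor $\mathbb A_\lambda$ of $S_\lambda$ exists for each $\lambda$. A subset of $\Lambda$ is residual if its complement is a countable union of nowhere dense sets. *)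

theory Defs
  imports "HOL-Analysis.Analysis"
begin

definition is_process :: "(real \<Rightarrow> real \<Rightarrow> 'x::metric_space \<Rightarrow> 'x) \<Rightarrow> bool" where
  "is_process S \<longleftrightarrow>
     (\<forall>t. S t t = id) \<and>
     (\<forall>t \<tau> s. s \<le> \<tau> \<and> \<tau> \<le> t \<longrightarrow> S t \<tau> \<circ> S \<tau> s = S t s) \<and>
     continuous_on {(x, t, s). s \<le> t} (\<lambda>(x, t, s). S t s x)"

text \<open>Hausdorff semi-distance and Hausdorff distance (intended for nonempty compact sets).\<close>
definition hsemidist :: "'x::metric_space set \<Rightarrow> 'x set \<Rightarrow> real" where
  "hsemidist A C = (SUP a\<in>A. infdist a C)"

definition hdist :: "'x::metric_space set \<Rightarrow> 'x set \<Rightarrow> real" where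
  "hdist A C = max (hsemidist A C) (hsemidist C A)"

definition uniformly_attracting :: "(real \<Rightarrow> real \<Rightarrow> 'x::metric_space \<Rightarrow> 'x) \<Rightarrow> 'x set \<Rightarrow> bool" where
  "uniformly_attracting S A \<longleftrightarrow>
     (\<forall>B. bounded B \<longrightarrow> (\<forall>e>0. \<exists>T. \<forall>t\<ge>T. \<forall>s. \<forall>y\<in>S (t + s) s ` B. \<exists>a\<in>A. dist y a < e))"

definition is_uniform_attractor :: "(real \<Rightarrow> real \<Rightarrow> 'x::metric_space \<Rightarrow> 'x) \<Rightarrow> 'x set \<Rightarrow> bool" where
  "is_uniform_attractor S A \<longleftrightarrow>
     compact A \<and> uniformly_attracting S A \<and>
     (\<forall>C. compact C \<and> uniformly_attracting S C \<longrightarrow> A \<subseteq> C)"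

definition nowhere_dense :: "'a::topological_space set \<Rightarrow> bool" where
  "nowhere_dense N \<longleftrightarrow> interior (closure N) = {}"

definition residual :: "'a::topological_space set \<Rightarrow> bool" where
  "residual R \<longleftrightarrow> (\<exists>F::nat \<Rightarrow> 'a set. (\<forall>n. nowhere_dense (F n)) \<and> - R = (\<Union>n. F n))"

end

theory Submission
  imports Defs
begin

lemma infdist_geI:
  assumes "A \<noteq> {}" "\<And>a. a \<in> A \<Longrightarrow> d \<le> dist x a"
  shows "d \<le> infdist x A"
  using assms by (simp add: infdist_notempty cINF_greatest)

lemma infdist_lessE:
  assumes "A \<noteq> {}" "infdist x A < e"
  obtains a where "a \<in> A" "dist x a < e"
  using infdist_geI[of A e x] assms by force

lemma infdist_closure_eq: "infdist x (closure A) = infdist x A"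
  by (simp add: infdist_eq_setdist)

locale thm_setup =
  fixes S :: "'l::complete_space \<Rightarrow> real \<Rightarrow> real \<Rightarrow> 'x::complete_space \<Rightarrow> 'x"
    and K :: "'x set"
    and A :: "'l \<Rightarrow> 'x set"
  assumes proc: "\<And>l. is_process (S l)"
    and K_compact: "compact K"
    and absorb: "\<And>B l. bounded B \<Longrightarrow> \<exists>T. \<forall>t\<ge>T. \<forall>s. S l (t + s) s ` B \<subseteq> K"
    and unif_cont: "\<And>l0 t e. t > 0 \<Longrightarrow> e > 0 \<Longrightarrow>
        \<exists>d>0. \<forall>l. dist l l0 < d \<longrightarrow>
          (\<forall>s. \<forall>x\<in>K. dist (S l (t + s) s x) (S l0 (t + s) s x) < e)"
    and attr: "\<And>l. is_uniform_attractor (S l) (A l)"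
begin

definition P :: "nat \<Rightarrow> 'l \<Rightarrow> 'x set" where
  "P n l = (\<Union>s. S l (real n + s) s ` K)"

lemma K_ne: "K \<noteq> {}"
proof -
  obtain T where "\<forall>t\<ge>T. \<forall>s. S undefined (t + s) s ` {undefined} \<subseteq> K"
    using absorb[of "{undefined}" undefined] by auto
  hence "S undefined (T + 0) 0 undefined \<in> K" by blast
  thus ?thesis by auto
qed

lemma P_ne: "P n l \<noteq> {}"
  using K_ne unfolding P_def by auto

lemma A_ne: "A l \<noteq> {}"
proof -
  have "uniformly_attracting (S l) (A l)" using attr[of l] by (simp add: is_uniform_attractor_def)
  then obtain T where "\<forall>t\<ge>T. \<forall>s. \<forall>y\<in>S l (t + s) s ` {undefined}. \<exists>a\<in>A l. dist y a < 1"
    unfolding uniformly_attracting_def by (meson bounded_insert bounded_empty zero_less_one)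
  hence "\<exists>a\<in>A l. dist (S l (T + 0) 0 undefined) a < 1" by blast
  thus ?thesis by auto
qed

lemma A_sub: "A l \<subseteq> closure (P n l)"
proof -
  let ?C = "closure (P n l) \<inter> K"
  have cC: "compact ?C" using K_compact by (intro closed_Int_compact) auto
  have comp_all: "\<forall>t \<tau> s. s \<le> \<tau> \<and> \<tau> \<le> t \<longrightarrow> S l t \<tau> \<circ> S l \<tau> s = S l t s"
    using proc[of l] unfolding is_process_def by blast
  have uC: "uniformly_attracting (S l) ?C"
    unfolding uniformly_attracting_def
  proof (intro allI impI)
    fix B :: "'x set" and e :: real assume B: "bounded B" and e: "e > 0"
    obtain T where T: "\<forall>t\<ge>T. \<forall>s. S l (t + s) s ` B \<subseteq> K" using absorb[OF B] by blast
    show "\<exists>T. \<forall>t\<ge>T. \<forall>s. \<forall>y\<in>S l (t + s) s ` B. \<exists>a\<in>?C. dist y a < e"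
    proof (intro exI[of _ "max T 0 + real n"] allI impI ballI)
      fix t s y assume t: "max T 0 + real n \<le> t" and y: "y \<in> S l (t + s) s ` B"
      then obtain b where b: "b \<in> B" and yb: "y = S l (t + s) s b" by auto
      have "t \<ge> T" using t by simp
      hence yK: "y \<in> K" using T y by blast
      have "t - real n \<ge> T" using t by simp
      hence "S l (t - real n + s) s ` B \<subseteq> K" using T by blast
      hence zK: "S l (t + s - real n) s b \<in> K" using b by (auto simp: algebra_simps)
      have "s \<le> t + s - real n" "t + s - real n \<le> t + s" using t by auto
      hence comp: "S l (t + s) (t + s - real n) \<circ> S l (t + s - real n) s = S l (t + s) s"
        using comp_all by blast
      have eq: "y = S l (t + s) (t + s - real n) (S l (t + s - real n) s b)"
        using comp yb by (metis comp_apply)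
      have "y \<in> S l (real n + (t + s - real n)) (t + s - real n) ` K" using zK eq by simp
      hence "y \<in> P n l" unfolding P_def by blast
      then show "\<exists>a\<in>?C. dist y a < e"
        using yK e closure_subset by (intro bexI[of _ y]) auto
    qed
  qed
  have "A l \<subseteq> ?C" using attr[of l] cC uC unfolding is_uniform_attractor_def by blast
  thus ?thesis by auto
qed

lemma attract_K:
  assumes "\<eta> > 0"
  obtains N :: nat where "\<And>n y. n \<ge> N \<Longrightarrow> y \<in> P n l \<Longrightarrow> infdist y (A l) < \<eta>"
proof -
  have "uniformly_attracting (S l) (A l)" using attr[of l] by (simp add: is_uniform_attractor_def)
  then obtain T where T: "\<forall>t\<ge>T. \<forall>s. \<forall>y\<in>S l (t + s) s ` K. \<exists>a\<in>A l. dist y a < \<eta>"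
    using K_compact assms unfolding uniformly_attracting_def by (meson compact_imp_bounded)
  obtain N :: nat where N: "T \<le> real N" using real_arch_simple by blast
  show thesis
  proof (rule that)
    fix n y assume n: "N \<le> n" and y: "y \<in> P n l"
    then obtain s x where x: "x \<in> K" and yx: "y = S l (real n + s) s x" unfolding P_def by auto
    have "real n \<ge> T" using N n by (meson of_nat_le_iff order_trans)
    then obtain a where "a \<in> A l" "dist y a < \<eta>" using T x yx by blast
    then show "infdist y (A l) < \<eta>" using infdist_le by (meson le_less_trans)
  qed
qed

lemma P_cont:
  assumes "n \<ge> 1" "\<epsilon> > 0"
  shows "\<exists>d>0. \<forall>l. dist l l0 < d \<longrightarrow> (\<forall>y\<in>P n l. \<exists>y'\<in>P n l0. dist y y' < \<epsilon>) \<and> (\<forall>y'\<in>P n l0. \<exists>y\<in>P n l. dist y y' < \<epsilon>)"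
proof -
  have "real n > 0" using assms by simp
  from unif_cont[OF this assms(2), of l0] obtain d where d: "d > 0" and
    H: "\<forall>l. dist l l0 < d \<longrightarrow> (\<forall>s. \<forall>x\<in>K. dist (S l (real n + s) s x) (S l0 (real n + s) s x) < \<epsilon>)"
    by blast
  have "(\<forall>y\<in>P n l. \<exists>y'\<in>P n l0. dist y y' < \<epsilon>) \<and> (\<forall>y'\<in>P n l0. \<exists>y\<in>P n l. dist y y' < \<epsilon>)"
    if l: "dist l l0 < d" for l
  proof (intro conjI ballI)
    fix y assume "y \<in> P n l"
    then obtain s x where x: "x \<in> K" and yx: "y = S l (real n + s) s x" unfolding P_def by auto
    show "\<exists>y'\<in>P n l0. dist y y' < \<epsilon>"
      by (rule bexI[of _ "S l0 (real n + s) s x"]) (use H l x yx in \<open>auto simp: P_def\<close>)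
  next
    fix y' assume "y' \<in> P n l0"
    then obtain s x where x: "x \<in> K" and yx: "y' = S l0 (real n + s) s x" unfolding P_def by auto
    show "\<exists>y\<in>P n l. dist y y' < \<epsilon>"
      by (rule bexI[of _ "S l (real n + s) s x"]) (use H l x yx in \<open>auto simp: P_def\<close>)
  qed
  then show ?thesis using d by blast
qed

lemma dense_good:
  assumes r: "r > 0" and eta: "\<eta> > 0"
  shows "\<exists>l0 d. dist l0 l1 < r \<and> d > 0 \<and>
     (\<forall>l l'. dist l l0 < d \<longrightarrow> dist l' l0 < d \<longrightarrow> (\<forall>a\<in>A l. infdist a (A l') \<le> \<eta>))"
proof -
  define e where "e = \<eta> / 6"
  have e: "e > 0" using eta by (simp add: e_def)
  define F where "F N = {l. \<forall>n k. Suc N \<le> n \<longrightarrow> Suc N \<le> k \<longrightarrow> (\<forall>y\<in>P n l. infdist y (P k l) \<le> e)}" for N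
  have closedF: "closed (F N)" for N
  proof -
    have "open (- F N)"
      unfolding open_dist
    proof (intro ballI)
      fix l assume "l \<in> - F N"
      then obtain n k y where n: "Suc N \<le> n" and k: "Suc N \<le> k" and y: "y \<in> P n l"
        and gt: "infdist y (P k l) > e"
        unfolding F_def by (auto simp: not_le)
      define g where "g = infdist y (P k l) - e"
      have g: "g > 0" using gt by (simp add: g_def)
      obtain s x where x: "x \<in> K" and yx: "y = S l (real n + s) s x" using y unfolding P_def by auto
      have "real n > 0" using n by simp
      from unif_cont[OF this, of "g/3" l] g obtain d1 where d1: "d1 > 0" and
        H1: "\<forall>l'. dist l' l < d1 \<longrightarrow> (\<forall>s. \<forall>x\<in>K. dist (S l' (real n + s) s x) (S l (real n + s) s x) < g/3)"
        by auto
      have k1: "1 \<le> k" using k by simp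
      have g3: "g/3 > 0" using g by simp
      obtain d2 where d2: "d2 > 0" and
        H2: "\<forall>l'. dist l' l < d2 \<longrightarrow> (\<forall>z'\<in>P k l'. \<exists>z\<in>P k l. dist z' z < g/3)"
        using P_cont[OF k1 g3, of l] by blast
      show "\<exists>d>0. \<forall>l'. dist l' l < d \<longrightarrow> l' \<in> - F N"
      proof (intro exI[of _ "min d1 d2"] conjI allI impI)
        show "min d1 d2 > 0" using d1 d2 by simp
        fix l' assume l': "dist l' l < min d1 d2"
        define y' where "y' = S l' (real n + s) s x"
        have y'P: "y' \<in> P n l'" unfolding y'_def P_def using x by auto
        have dy: "dist y' y < g/3" using H1 l' x unfolding y'_def yx by auto
        have "infdist y (P k l) - 2*g/3 \<le> infdist y' (P k l')"
        proof (rule infdist_geI)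
          show "P k l' \<noteq> {}" by (rule P_ne)
          fix z' assume z': "z' \<in> P k l'"
          then obtain z where z: "z \<in> P k l" "dist z' z < g/3" using H2 l' by auto
          have "infdist y (P k l) \<le> dist y z" using infdist_le z(1) .
          then show "infdist y (P k l) - 2*g/3 \<le> dist y' z'"
            using dist_triangle[of y z y'] dist_triangle[of y' z z'] dist_commute[of y y'] dy z(2)
            by linarith
        qed
        hence "infdist y' (P k l') > e" using g unfolding g_def by (simp add: field_simps)
        thus "l' \<in> - F N" using n k y'P unfolding F_def by force
      qed
    qed
    then show ?thesis by (simp add: closed_def)
  qed
  have cover: "\<exists>N. l \<in> F N" for l
  proof -
    obtain N where N: "\<And>n y. n \<ge> N \<Longrightarrow> y \<in> P n l \<Longrightarrow> infdist y (A l) < e"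
      using attract_K[OF e] by metis
    have "l \<in> F N" unfolding F_def
    proof (intro CollectI allI impI ballI)
      fix n k y assume n: "Suc N \<le> n" and k: "Suc N \<le> k" and y: "y \<in> P n l"
      have "infdist y (P k l) = infdist y (closure (P k l))" by (simp add: infdist_closure_eq)
      also have "\<dots> \<le> infdist y (A l)" by (rule infdist_mono[OF A_sub A_ne])
      also have "\<dots> < e" using N[of n y] n y by simp
      finally show "infdist y (P k l) \<le> e" by simp
    qed
    thus ?thesis by blast
  qed
  define C where "C = cball l1 (r/2)"
  define G where "G = range (\<lambda>N. F N \<inter> C)"
  have UG: "\<Union>G = C" using cover unfolding G_def by auto
  have "ball l1 (r/2) \<subseteq> interior C" unfolding C_def
    by (intro interior_maximal ball_subset_cball open_ball)
  hence "l1 \<in> interior C" using r by (meson centre_in_ball half_gt_zero subsetD)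
  hence "interior (\<Union>G) \<noteq> {}" unfolding UG by blast
  then obtain N where "interior (F N \<inter> C) \<noteq> {}"
  proof -
    assume *: "interior (\<Union>G) \<noteq> {}"
    show thesis
    proof (rule ccontr)
      assume nt: "\<not> thesis"
      have "euclidean interior_of \<Union>G = {}"
      proof (rule Baire_category_alt)
        show "completely_metrizable_space (euclidean :: 'l topology) \<or>
              locally_compact_space (euclidean :: 'l topology) \<and> regular_space (euclidean :: 'l topology)"
          by (rule disjI1, rule completely_metrizable_space_euclidean)
        show "countable G" unfolding G_def by simp
        fix T assume "T \<in> G"
        then obtain N where TN: "T = F N \<inter> C" unfolding G_def by blast
        have "closed T" unfolding TN C_def using closedF by (intro closed_Int) auto
        moreover have "interior T = {}"
        proof (rule ccontr)
          assume "interior T \<noteq> {}"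
          hence thesis using that[of N] TN by simp
          thus False using nt by simp
        qed
        ultimately show "closedin euclidean T \<and> euclidean interior_of T = {}"
          by (metis closed_closedin euclidean_interior_of)
      qed
      thus False using * by simp
    qed
  qed
  then obtain l2 where "l2 \<in> interior (F N \<inter> C)" by auto
  then obtain \<rho> where \<rho>: "\<rho> > 0" "ball l2 \<rho> \<subseteq> F N \<inter> C" by (meson mem_interior)
  have l2C: "l2 \<in> C" using \<rho> by auto
  have M1: "1 \<le> Suc N" by simp
  obtain d3 where d3: "d3 > 0" and
    H3: "\<forall>l. dist l l2 < d3 \<longrightarrow> (\<forall>y\<in>P (Suc N) l. \<exists>y'\<in>P (Suc N) l2. dist y y' < e) \<and>
          (\<forall>y'\<in>P (Suc N) l2. \<exists>y\<in>P (Suc N) l. dist y y' < e)"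
    using P_cont[OF M1 e, of l2] by blast
  have good: "\<forall>a\<in>A l. infdist a (A l') \<le> \<eta>"
    if l: "dist l l2 < min \<rho> d3" and l': "dist l' l2 < min \<rho> d3" for l l'
  proof
    fix a assume a: "a \<in> A l"
    have lF': "l' \<in> F N" using \<rho> l' by (auto simp: dist_commute)
    have "a \<in> closure (P (Suc N) l)" using A_sub a by blast
    then obtain p where p: "p \<in> P (Suc N) l" "dist p a < e" using e
      by (meson closure_approachable)
    have ld: "dist l l2 < d3" "dist l' l2 < d3" using l l' by auto
    obtain q where q: "q \<in> P (Suc N) l2" "dist p q < e" using H3 ld(1) p(1) by blast
    obtain p' where p': "p' \<in> P (Suc N) l'" "dist p' q < e" using H3 ld(2) q(1) by blast
    obtain N' where N': "\<And>n y. n \<ge> N' \<Longrightarrow> y \<in> P n l' \<Longrightarrow> infdist y (A l') < e"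
      using attract_K[OF e] by metis
    define k where "k = max N' (Suc N)"
    have "infdist p' (P k l') \<le> e" using lF' p'(1) unfolding F_def k_def by auto
    hence "infdist p' (P k l') < 2*e" using e by simp
    then obtain z where z: "z \<in> P k l'" "dist p' z < 2*e" using P_ne infdist_lessE by metis
    have "infdist z (A l') < e" using N'[OF _ z(1)] unfolding k_def by simp
    hence i1: "infdist p' (A l') < 3*e" using infdist_triangle[of p' "A l'" z] z(2) by linarith
    have "infdist a (A l') \<le> infdist p' (A l') + dist a p'" by (rule infdist_triangle)
    moreover have "dist a p' \<le> dist a p + dist p q + dist q p'"
      using dist_triangle[of a p' p] dist_triangle[of p p' q] by linarith
    ultimately show "infdist a (A l') \<le> \<eta>"
      using i1 p(2) q(2) p'(2) dist_commute[of a p] dist_commute[of q p'] unfolding e_def by linarith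
  qed
  have "dist l2 l1 < r" using l2C r unfolding C_def by (simp add: dist_commute)
  moreover have "min \<rho> d3 > 0" using \<rho> d3 by simp
  ultimately show ?thesis using good by blast
qed

end

theorem theorem4p1:
  fixes S :: "'l::complete_space \<Rightarrow> real \<Rightarrow> real \<Rightarrow> 'x::complete_space \<Rightarrow> 'x"
    and K :: "'x set"
    and A :: "'l \<Rightarrow> 'x set"
  assumes proc: "\<And>l. is_process (S l)"
    and K_compact: "compact K"
    and absorb: "\<And>B l. bounded B \<Longrightarrow> \<exists>T. \<forall>t\<ge>T. \<forall>s. S l (t + s) s ` B \<subseteq> K"
    and unif_cont: "\<And>l0 t e. t > 0 \<Longrightarrow> e > 0 \<Longrightarrow>
        \<exists>d>0. \<forall>l. dist l l0 < d \<longrightarrow>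
          (\<forall>s. \<forall>x\<in>K. dist (S l (t + s) s x) (S l0 (t + s) s x) < e)"
    and attr: "\<And>l. is_uniform_attractor (S l) (A l)"
  shows "\<exists>R. residual R \<and>
    (\<forall>l0\<in>R. \<forall>e>0. \<exists>d>0. \<forall>l. dist l l0 < d \<longrightarrow> hdist (A l) (A l0) < e)"
proof -
  interpret T: thm_setup S K A
    apply unfold_locales
        apply (rule proc)
       apply (rule K_compact)
      apply (erule absorb)
     apply (erule (1) unif_cont)
    apply (rule attr)
    done
  define G where "G m = {l0. \<exists>d>0. \<forall>l l'. dist l l0 < d \<longrightarrow> dist l' l0 < d \<longrightarrow>
      (\<forall>a\<in>A l. infdist a (A l') \<le> 1 / real (Suc m))}" for m
  have openG: "open (G m)" for m
    unfolding open_dist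
  proof (intro ballI)
    fix x assume "x \<in> G m"
    then obtain d where d: "d > 0" and H: "\<forall>l l'. dist l x < d \<longrightarrow> dist l' x < d \<longrightarrow>
        (\<forall>a\<in>A l. infdist a (A l') \<le> 1 / real (Suc m))" unfolding G_def by blast
    show "\<exists>e>0. \<forall>y. dist y x < e \<longrightarrow> y \<in> G m"
    proof (intro exI[of _ "d/2"] conjI allI impI)
      show "d/2 > 0" using d by simp
      fix y assume y: "dist y x < d/2"
      show "y \<in> G m" unfolding G_def
      proof (intro CollectI exI[of _ "d/2"] conjI allI impI)
        show "d/2 > 0" using d by simp
        fix l l' assume "dist l y < d/2" "dist l' y < d/2"
        then have "dist l x < d" "dist l' x < d"
          using y dist_triangle[of l x y] dist_triangle[of l' x y] by linarith+
        then show "\<forall>a\<in>A l. infdist a (A l') \<le> 1 / real (Suc m)" using H by blast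
      qed
    qed
  qed
  have nd: "nowhere_dense (- G m)" for m
  proof -
    have "closed (- G m)" using openG by (rule closed_Compl)
    hence "closure (- G m) = - G m" by (rule closure_closed)
    moreover have "interior (- G m) = {}"
    proof (rule ccontr)
      assume "interior (- G m) \<noteq> {}"
      then obtain x where "x \<in> interior (- G m)" by auto
      then obtain r where r: "r > 0" "ball x r \<subseteq> - G m" by (meson mem_interior)
      have pos: "1 / real (Suc m) > 0" by simp
      obtain l0 d where l0: "dist l0 x < r" "d > 0"
        "\<forall>l l'. dist l l0 < d \<longrightarrow> dist l' l0 < d \<longrightarrow> (\<forall>a\<in>A l. infdist a (A l') \<le> 1 / real (Suc m))"
        using T.dense_good[OF r(1) pos, of x] by blast
      then have "l0 \<in> G m" unfolding G_def by blast
      moreover have "l0 \<in> ball x r" using l0(1) by (simp add: dist_commute)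
      ultimately show False using r by auto
    qed
    ultimately show ?thesis unfolding nowhere_dense_def by simp
  qed
  show ?thesis
  proof (intro exI[of _ "\<Inter>m. G m"] conjI ballI allI impI)
    show "residual (\<Inter>m. G m)" unfolding residual_def
      by (intro exI[of _ "\<lambda>m. - G m"]) (auto simp: nd)
    fix l0 and e :: real assume l0: "l0 \<in> (\<Inter>m. G m)" and e: "e > 0"
    obtain m where m: "1 / real (Suc m) < e"
      using reals_Archimedean[OF e] by (auto simp: inverse_eq_divide)
    from l0 have "l0 \<in> G m" by blast
    then obtain d where d: "d > 0" and H: "\<forall>l l'. dist l l0 < d \<longrightarrow> dist l' l0 < d \<longrightarrow>
        (\<forall>a\<in>A l. infdist a (A l') \<le> 1 / real (Suc m))" unfolding G_def by blast
    show "\<exists>d>0. \<forall>l. dist l l0 < d \<longrightarrow> hdist (A l) (A l0) < e"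
    proof (intro exI[of _ d] conjI allI impI)
      show "d > 0" by (rule d)
      fix l assume l: "dist l l0 < d"
      have "hsemidist (A l) (A l0) \<le> 1 / real (Suc m)" unfolding hsemidist_def
        by (rule cSUP_least) (use T.A_ne H l d in auto)
      moreover have "hsemidist (A l0) (A l) \<le> 1 / real (Suc m)" unfolding hsemidist_def
      proof (rule cSUP_least)
        show "A l0 \<noteq> {}" by (rule T.A_ne)
        fix x assume "x \<in> A l0"
        moreover have "dist l0 l0 < d" using d by simp
        ultimately show "infdist x (A l) \<le> 1 / real (Suc m)" using H l by blast
      qed
      ultimately show "hdist (A l) (A l0) < e" using m unfolding hdist_def by simp
    qed
  qed
qed

end
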